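(* Let $y,l,u\in\mathcal{R}(\mathbb{R}^{+},\mathbb{R})$ be such that $l\leq u$ and $l_0\leq y_0\leq u_0$. Let $(\xi,\kappa)$ be the solution of $RP_l(y)$. Then for all $t\geq0$, $$\alpha^{l}(y)_t\vee\beta^{u}_{l}(y)_t=\alpha^{l}(y)_t+\Theta^u_l(\xi)_t.$$
   Context: A function $f:\mathbb{R}^+=[0,\infty)\to\mathbb{R}$ is regulated if it has a left limit $f_{t^-}$ at every $t>0$ and a right limit $f_{t^+}$ at every $t\geq0$; $\mathcal{R}(\mathbb{R}^{+},\mathbb{R})$ is the set of regulated functions. $a\wedge b=\min(a,b)$, $a\vee b=\max(a,b)$, $a^+=a\vee0$. Maps: $\alpha^{l}(y)_t=\inf_{s\leq t}\big((y_s-l_s)\wedge(y_{s^+}-l_{s^+})\wedge 0\big)$; $\beta^{u}_{l}(y)_t=\sup_{s\leq t}\Big(\big((y_s-u_s)\vee(y_{s^+}-u_{s^+})\big)\wedge\inf_{s\leq r\leq t}\big[\big((y_r-l_r)\wedge(y_{r^+}-l_{r^+})\big)\vee(y_r-u_r)\big]\Big)$; $\Theta^{u}_{l}(f)_t=\sup_{s\leq t}\Big(\big((f_s-u_s)\vee(f_{s^+}-u_{s^+})\big)^+\wedge\inf_{s\leq r\leq t}\big[\big((f_r-l_r)\wedge(f_{r^+}-l_{r^+})\big)\vee(f_r-u_r)\big]\Big)$. One-barrier problem $RP_l(y)$ (for $y,l$ regulated with $y_0\geq l_0$): the unique pair $(\xi,\kappa)$ with $\xi=y+\kappa\geq l$,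 $\kappa$ non-decreasing, right-continuous, $\kappa_0=0$, and $\int_{[0,\infty[}(\xi_s-l_s)\wedge(\xi_{s^+}-l_{s^+})\,d\kappa_s=0$; explicitly $\kappa=-\alpha^l(y)$. *)

theory Defs
  imports "HOL-Analysis.Analysis"
begin

text \<open>Functions on R+ = [0,inf) are modelled as real => real; values at negative
arguments are irrelevant (every notion below only looks at t >= 0).\<close>

definition regulated :: "(real \<Rightarrow> real) \<Rightarrow> bool" where
  "regulated f \<longleftrightarrow>
     (\<forall>t>0. \<exists>L. (f \<longlongrightarrow> L) (at_left t)) \<and>
     (\<forall>t\<ge>0. \<exists>L. (f \<longlongrightarrow> L) (at_right t))"

definition rlim :: "(real \<Rightarrow> real) \<Rightarrow> real \<Rightarrow> real" where
  "rlim f t = Lim (at_right t) f"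

definition alpha :: "(real \<Rightarrow> real) \<Rightarrow> (real \<Rightarrow> real) \<Rightarrow> real \<Rightarrow> real" where
  "alpha l y t = (INF s\<in>{0..t}. min (min (y s - l s) (rlim y s - rlim l s)) 0)"

definition beta :: "(real \<Rightarrow> real) \<Rightarrow> (real \<Rightarrow> real) \<Rightarrow> (real \<Rightarrow> real) \<Rightarrow> real \<Rightarrow> real" where
  "beta u l y t = (SUP s\<in>{0..t}.
      min (max (y s - u s) (rlim y s - rlim u s))
          (INF r\<in>{s..t}. max (min (y r - l r) (rlim y r - rlim l r)) (y r - u r)))"

definition Theta :: "(real \<Rightarrow> real) \<Rightarrow> (real \<Rightarrow> real) \<Rightarrow> (real \<Rightarrow> real) \<Rightarrow> real \<Rightarrow> real" where
  "Theta u l f t = (SUP s\<in>{0..t}.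
      min (max (max (f s - u s) (rlim f s - rlim u s)) 0)
          (INF r\<in>{s..t}. max (min (f r - l r) (rlim f r - rlim l r)) (f r - u r)))"

text \<open>The Stieltjes
integral d kappa over [0,inf) is taken w.r.t. the Lebesgue-Stieltjes measure of
kappa extended by kappa(0)=0 to the negative half-line (no atom at 0, as kappa_0 = 0).
The integrand is nonnegative since xi >= l, so a nonnegative integral is used.\<close>
definition RP_sol :: "(real \<Rightarrow> real) \<Rightarrow> (real \<Rightarrow> real) \<Rightarrow> (real \<Rightarrow> real) \<Rightarrow> (real \<Rightarrow> real) \<Rightarrow> bool" where
  "RP_sol l y xi kappa \<longleftrightarrow>
     (\<forall>t\<ge>0. xi t = y t + kappa t) \<and>
     (\<forall>t\<ge>0. xi t \<ge> l t) \<and>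
     mono_on {0..} kappa \<and>
     (\<forall>t\<ge>0. continuous (at_right t) kappa) \<and>
     kappa 0 = 0 \<and>
     (\<integral>\<^sup>+ s. ennreal (min (xi s - l s) (rlim xi s - rlim l s)) * indicator {0..} s
        \<partial>interval_measure (\<lambda>x. kappa (max x 0))) = 0"

end

theory Submission
  imports Defs
begin
lemma key:
  fixes K g :: "real \<Rightarrow> real"
  assumes mono: "mono_on {0..} K"
    and rc: "\<forall>t\<ge>0. continuous (at_right t) K"
    and int0: "(\<integral>\<^sup>+ x. ennreal (g x) * indicator {0..} x \<partial>interval_measure (\<lambda>x. K (max x 0))) = 0"
    and s0: "0 \<le> s" and st: "s \<le> t" and Ks: "K s < \<theta>" and Kt: "\<theta> < K t" and dpos: "\<delta> > 0"
  shows "\<exists>r\<in>{s..t}. \<theta> \<le> K r \<and> g r < \<delta>"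
proof (rule ccontr)
  assume neg: "\<not> ?thesis"
  have monoK: "K x \<le> K y" if "0 \<le> x" "x \<le> y" for x y
    using mono that by (auto simp: mono_on_def)
  define D where "D = {r\<in>{s..t}. \<theta> \<le> K r}"
  have tD: "t \<in> D" using st Kt by (auto simp: D_def)
  have bddD: "bdd_below D" unfolding D_def by (rule bdd_belowI[of _ s]) auto
  define \<sigma> where "\<sigma> = Inf D"
  have \<sigma>t: "\<sigma> \<le> t" unfolding \<sigma>_def using tD bddD by (rule cInf_lower)
  have s\<sigma>: "s \<le> \<sigma>" unfolding \<sigma>_def using tD by (intro cInf_greatest) (auto simp: D_def)
  have h1: "K x < \<theta>" if "0 \<le> x" "x < \<sigma>" for x
  proof (cases "x < s")
    case True then show ?thesis using monoK[of x s] that Ks by linarith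
  next
    case False
    show ?thesis
    proof (rule ccontr)
      assume "\<not> K x < \<theta>"
      then have "x \<in> D" using False that \<sigma>t by (auto simp: D_def)
      then have "\<sigma> \<le> x" unfolding \<sigma>_def using bddD by (rule cInf_lower)
      then show False using that by linarith
    qed
  qed
  have h2: "\<theta> \<le> K x" if "\<sigma> < x" "x \<le> t" for x
  proof -
    from that(1) have "\<exists>d\<in>D. d < x" unfolding \<sigma>_def using tD bddD
      by (subst (asm) cInf_less_iff) auto
    then obtain d where "d \<in> D" "d < x" by blast
    then show ?thesis using monoK[of d x] s0 by (auto simp: D_def)
  qed
  have h3: "\<theta> \<le> K \<sigma>"
  proof (cases "\<sigma> = t")
    case True then show ?thesis using Kt by simp
  next
    case False
    then have lt: "\<sigma> < t" using \<sigma>t by simp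
    have "(K \<longlongrightarrow> K \<sigma>) (at_right \<sigma>)" using rc s0 s\<sigma> by (auto simp: continuous_within)
    moreover have "eventually (\<lambda>x. \<theta> \<le> K x) (at_right \<sigma>)"
      using eventually_at_right_real[OF lt] by eventually_elim (use h2 in auto)
    ultimately show ?thesis by (intro tendsto_lowerbound) auto
  qed
  have s\<sigma>': "s < \<sigma>" using s\<sigma> h3 Ks by (cases "s = \<sigma>") auto
  define F where "F x = K (max x 0)" for x
  have monoF: "F x \<le> F y" if "x \<le> y" for x y
    unfolding F_def using that by (intro monoK) auto
  have rcF: "continuous (at_right a) F" for a
  proof (cases "a < 0")
    case True
    have "eventually (\<lambda>x. F x = F a) (at_right a)"
      using eventually_at_right_real[OF True] by eventually_elim (use True in \<open>auto simp: F_def\<close>)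
    then have "(F \<longlongrightarrow> F a) (at_right a)" by (simp add: tendsto_eventually)
    then show ?thesis by (simp add: continuous_within)
  next
    case False
    have "(K \<longlongrightarrow> K a) (at_right a)" using rc False by (auto simp: continuous_within)
    moreover have "eventually (\<lambda>x. K x = F x) (at_right a)"
      using eventually_at_right_real[of a "a+1", OF less_add_one] by eventually_elim (use False in \<open>auto simp: F_def\<close>)
    ultimately have "(F \<longlongrightarrow> K a) (at_right a)" by (rule Lim_transform_eventually)
    then show ?thesis using False by (simp add: continuous_within F_def)
  qed
  have meas: "emeasure (interval_measure F) {a<..b} = ennreal (F b - F a)" if "a \<le> b" for a b
    using emeasure_interval_measure_Ioc[OF that monoF rcF] by simp
  define A where "A n = {\<sigma> - 1 / real (Suc n)<..t}" for n
  have decA: "decseq A" unfolding decseq_def A_def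
  proof (intro allI impI subsetI)
    fix m n x assume mn: "m \<le> n" and x: "x \<in> {\<sigma> - 1 / real (Suc n)<..t}"
    have "1 / real (Suc n) \<le> 1 / real (Suc m)" using mn by (intro divide_left_mono) auto
    with x show "x \<in> {\<sigma> - 1 / real (Suc m)<..t}" by auto
  qed
  have Aeq: "(\<Inter>n. A n) = {\<sigma>..t}"
  proof (rule set_eqI, rule iffI)
    fix x assume "x \<in> (\<Inter>n. A n)"
    then have x: "\<And>n. \<sigma> - 1 / real (Suc n) < x" "x \<le> t" by (auto simp: A_def)
    have "\<sigma> \<le> x"
    proof (rule ccontr)
      assume "\<not> \<sigma> \<le> x"
      then obtain n where "inverse (real (Suc n)) < \<sigma> - x" using reals_Archimedean[of "\<sigma> - x"] by auto
      then show False using x(1)[of n] by (simp add: field_simps)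
    qed
    then show "x \<in> {\<sigma>..t}" using x by simp
  next
    fix x assume x: "x \<in> {\<sigma>..t}"
    have "x \<in> A n" for n
    proof -
      have p: "0 < 1 / real (Suc n)" by simp
      have "\<sigma> \<le> x" "x \<le> t" using x by auto
      then have "\<sigma> - 1 / real (Suc n) < x" using p by linarith
      then show ?thesis using \<open>x \<le> t\<close> unfolding A_def by simp
    qed
    then show "x \<in> (\<Inter>n. A n)" by blast
  qed
  have Ameas: "emeasure (interval_measure F) (A n) = ennreal (F t - F (\<sigma> - 1 / real (Suc n)))" for n
  proof -
    have p: "0 < 1 / real (Suc n)" by simp
    have "\<sigma> - 1 / real (Suc n) \<le> t" using p \<sigma>t by linarith
    then show ?thesis unfolding A_def by (rule meas)
  qed
  have Abig: "ennreal (K t - \<theta>) \<le> emeasure (interval_measure F) (A n)" for n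
  proof -
    have "F (\<sigma> - 1 / real (Suc n)) < \<theta>" unfolding F_def
      using s0 s\<sigma>' by (intro h1) auto
    moreover have "F t = K t" unfolding F_def using s0 st by simp
    ultimately show ?thesis unfolding Ameas by (intro ennreal_leI) simp
  qed
  have "(INF n. emeasure (interval_measure F) (A n)) = emeasure (interval_measure F) (\<Inter>n. A n)"
  proof (rule INF_emeasure_decseq[OF _ decA])
    show "range A \<subseteq> sets (interval_measure F)" by (auto simp: A_def)
    show "emeasure (interval_measure F) (A i) \<noteq> \<infinity>" for i unfolding Ameas by simp
  qed
  then have mbig: "ennreal (K t - \<theta>) \<le> emeasure (interval_measure F) {\<sigma>..t}"
    using Abig Aeq by (metis INF_greatest)
  have gbig: "\<delta> \<le> g x" if "x \<in> {\<sigma>..t}" for x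
  proof -
    have x: "\<sigma> \<le> x" "x \<le> t" using that by auto
    have "\<theta> \<le> K x" using h3 monoK[of \<sigma> x] s0 s\<sigma> x by linarith
    moreover have "x \<in> {s..t}" using x s\<sigma> by auto
    ultimately show ?thesis using neg by force
  qed
  have "ennreal \<delta> * emeasure (interval_measure F) {\<sigma>..t}
      = (\<integral>\<^sup>+ x. ennreal \<delta> * indicator {\<sigma>..t} x \<partial>interval_measure F)"
    by (simp add: nn_integral_cmult_indicator)
  also have "\<dots> \<le> (\<integral>\<^sup>+ x. ennreal (g x) * indicator {0..} x \<partial>interval_measure F)"
    by (intro nn_integral_mono) (use gbig s0 s\<sigma> in \<open>auto simp: indicator_def intro: ennreal_leI\<close>)
  also have "\<dots> = 0" using int0 unfolding F_def .
  finally have z: "ennreal \<delta> * emeasure (interval_measure F) {\<sigma>..t} = 0" by simp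
  have le: "ennreal \<delta> * ennreal (K t - \<theta>) \<le> ennreal \<delta> * emeasure (interval_measure F) {\<sigma>..t}"
    using mbig by (intro mult_left_mono) auto
  have "ennreal \<delta> * ennreal (K t - \<theta>) = 0" using z le by (metis le_zero_eq)
  then show False using dpos Kt by simp
qed

lemma rlim_tendsto:
  assumes "regulated f" "0 \<le> r"
  shows "(f \<longlongrightarrow> rlim f r) (at_right r)"
proof -
  obtain L where L: "(f \<longlongrightarrow> L) (at_right r)" using assms unfolding regulated_def by blast
  then have "rlim f r = L" unfolding rlim_def by (intro tendsto_Lim) auto
  then show ?thesis using L by simp
qed

theorem lemma3:
  fixes y l u xi kappa :: "real \<Rightarrow> real"
  assumes "regulated y" and "regulated l" and "regulated u"
    and "\<forall>t\<ge>0. l t \<le> u t"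
    and "l 0 \<le> y 0" and "y 0 \<le> u 0"
    and "RP_sol l y xi kappa"
    and "t \<ge> 0"
  shows "max (alpha l y t) (beta u l y t) = alpha l y t + Theta u l xi t"
proof -
  note RP = assms(7)[unfolded RP_sol_def]
  have xiK: "\<And>r. 0 \<le> r \<Longrightarrow> xi r = y r + kappa r" using RP by blast
  have xil: "\<And>r. 0 \<le> r \<Longrightarrow> l r \<le> xi r" using RP by blast
  have monoK: "mono_on {0..} kappa" using RP by blast
  have rc: "\<forall>t\<ge>0. continuous (at_right t) kappa" using RP by blast
  have k0: "kappa 0 = 0" using RP by blast
  have int0: "(\<integral>\<^sup>+ s. ennreal (min (xi s - l s) (rlim xi s - rlim l s)) * indicator {0..} s
        \<partial>interval_measure (\<lambda>x. kappa (max x 0))) = 0" using RP by blast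
  have mK: "kappa a \<le> kappa b" if "0 \<le> a" "a \<le> b" for a b
    using monoK that by (auto simp: mono_on_def)
  have t0: "0 \<le> t" by fact
  have rxi: "rlim xi r = rlim y r + kappa r" and rl: "rlim l r \<le> rlim xi r" if r0: "0 \<le> r" for r
  proof -
    have "(kappa \<longlongrightarrow> kappa r) (at_right r)" using rc r0 by (auto simp: continuous_within)
    then have "((\<lambda>x. y x + kappa x) \<longlongrightarrow> rlim y r + kappa r) (at_right r)"
      using rlim_tendsto[OF assms(1) r0] by (intro tendsto_add)
    moreover have ev: "eventually (\<lambda>x. 0 \<le> x) (at_right r)"
      using eventually_at_right_real[of r "r+1", OF less_add_one] by eventually_elim (use r0 in auto)
    then have "eventually (\<lambda>x. y x + kappa x = xi x) (at_right r)"
      by eventually_elim (simp add: xiK)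
    ultimately have T: "(xi \<longlongrightarrow> rlim y r + kappa r) (at_right r)" by (rule Lim_transform_eventually)
    then show "rlim xi r = rlim y r + kappa r" unfolding rlim_def by (intro tendsto_Lim) auto
    have "eventually (\<lambda>x. l x \<le> xi x) (at_right r)" using ev by eventually_elim (simp add: xil)
    then have "rlim l r \<le> rlim y r + kappa r"
      using rlim_tendsto[OF assms(2) r0] T by (intro tendsto_le[of "at_right r" xi _ l]) auto
    then show "rlim l r \<le> rlim xi r" using \<open>rlim xi r = rlim y r + kappa r\<close> by simp
  qed
  define c where "c r = min (y r - l r) (rlim y r - rlim l r)" for r
  define A where "A r = max (c r) (y r - u r)" for r
  define B where "B r = max (y r - u r) (rlim y r - rlim u r)" for r
  have g_eq: "min (xi r - l r) (rlim xi r - rlim l r) = c r + kappa r" if "0 \<le> r" for r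
    using that xiK rxi unfolding c_def by auto
  have g_nn: "0 \<le> c r + kappa r" if "0 \<le> r" for r
    using that xil rl g_eq[OF that] by (metis diff_ge_0_iff_ge min_def)
  have Kt0: "0 \<le> kappa r" if "0 \<le> r" for r using mK[of 0 r] that k0 by simp
  have alpha_eq: "alpha l y t = - kappa t"
  proof -
    have al: "alpha l y t = (INF s\<in>{0..t}. min (c s) 0)" unfolding alpha_def c_def by simp
    have lb: "- kappa t \<le> min (c s) 0" if "s \<in> {0..t}" for s
      using that g_nn[of s] mK[of s t] Kt0[of t] by auto
    have bdd: "bdd_below ((\<lambda>s. min (c s) 0) ` {0..t})" using lb by (intro bdd_belowI2[where m="- kappa t"]) blast
    have ge: "- kappa t \<le> alpha l y t" unfolding al using t0 lb by (intro cINF_greatest) auto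
    have "\<not> - kappa t < alpha l y t"
    proof
      assume less: "- kappa t < alpha l y t"
      define v where "v = - alpha l y t"
      have v0: "0 \<le> v" unfolding v_def al using bdd t0
        by (smt (verit) atLeastAtMost_iff cINF_lower order_refl)
      have cv: "- v \<le> c r" if "r \<in> {0..t}" for r
        unfolding v_def al using bdd that by (smt (verit) cINF_lower)
      have "\<exists>r\<in>{0..t}. (v + kappa t)/2 \<le> kappa r \<and>
              min (xi r - l r) (rlim xi r - rlim l r) < (v + kappa t)/2 - v"
      proof (rule key[OF monoK rc int0])
        show "0 \<le> (0::real)" "0 \<le> t" using t0 by auto
        have h2: "(v + kappa t) / 2 * 2 = v + kappa t" by simp
        have lv: "v < kappa t" using less unfolding v_def by linarith
        show "kappa 0 < (v + kappa t) / 2" using h2 lv v0 k0 by linarith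
        show "(v + kappa t) / 2 < kappa t" using h2 lv by linarith
        show "0 < (v + kappa t) / 2 - v" using h2 lv by linarith
      qed
      then obtain r where r: "r \<in> {0..t}" "(v + kappa t)/2 \<le> kappa r"
        "c r + kappa r < (v + kappa t)/2 - v" using g_eq by auto
      then show False using cv[OF r(1)] by linarith
    qed
    then show ?thesis using ge by linarith
  qed
  define K where "K = kappa"
  define I where "I s = (INF r\<in>{s..t}. A r)" for s
  define J where "J s = (INF r\<in>{s..t}. A r + K r)" for s
  have beta_eq: "beta u l y t = (SUP s\<in>{0..t}. min (B s) (I s))"
    unfolding beta_def B_def I_def A_def c_def by simp
  have Theta_eq: "Theta u l xi t = (SUP s\<in>{0..t}. min (max (B s + K s) 0) (J s))"
    unfolding Theta_def
  proof (intro SUP_cong refl)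
    fix s assume s: "s \<in> {0..t}"
    have "max (max (xi s - u s) (rlim xi s - rlim u s)) 0 = max (B s + K s) 0"
      using s xiK[of s] rxi[of s] unfolding B_def K_def by auto
    moreover have "(INF r\<in>{s..t}. max (min (xi r - l r) (rlim xi r - rlim l r)) (xi r - u r)) = J s"
      unfolding J_def
    proof (intro INF_cong refl)
      fix r assume r: "r \<in> {s..t}"
      then have r0: "0 \<le> r" using s by auto
      show "max (min (xi r - l r) (rlim xi r - rlim l r)) (xi r - u r) = A r + K r"
        using g_eq[OF r0] xiK[OF r0] unfolding A_def K_def by auto
    qed
    ultimately show "min (max (max (xi s - u s) (rlim xi s - rlim u s)) 0)
        (INF r\<in>{s..t}. max (min (xi r - l r) (rlim xi r - rlim l r)) (xi r - u r)) =
      min (max (B s + K s) 0) (J s)" by simp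
  qed
  have mK': "K a \<le> K b" if "0 \<le> a" "a \<le> b" for a b using mK that unfolding K_def .
  have Alb: "- K t \<le> A r" if "r \<in> {0..t}" for r
    using that g_nn[of r] mK'[of r t] unfolding A_def K_def by auto
  have AKnn: "0 \<le> A r + K r" if "0 \<le> r" for r
    using that g_nn[of r] unfolding A_def K_def by auto
  have bddI: "bdd_below (A ` {s..t})" if "0 \<le> s" for s
  proof (rule bdd_belowI2[where m="- K t"])
    fix r assume "r \<in> {s..t}" then show "- K t \<le> A r" using Alb that by simp
  qed
  have bddJ: "bdd_below ((\<lambda>r. A r + K r) ` {s..t})" if "0 \<le> s" for s
  proof (rule bdd_belowI2[where m="0"])
    fix r assume "r \<in> {s..t}" then show "0 \<le> A r + K r" using AKnn that by simp
  qed
  have I_le: "I s \<le> A r" if "0 \<le> s" "r \<in> {s..t}" for s r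
    unfolding I_def using bddI[OF that(1)] that(2) by (rule cINF_lower)
  have J_le': "J s \<le> A r + K r" if "0 \<le> s" "r \<in> {s..t}" for s r
    unfolding J_def using bddJ[OF that(1)] that(2) by (rule cINF_lower)
  have I_mono: "I s \<le> I s'" if "0 \<le> s" "s \<le> s'" "s' \<le> t" for s s'
    unfolding I_def[of s']
  proof (rule cINF_greatest)
    show "{s'..t} \<noteq> {}" using that by simp
    fix r assume "r \<in> {s'..t}" then show "I s \<le> A r" using that by (intro I_le) auto
  qed
  have J_ge: "I s + K s \<le> J s" if "0 \<le> s" "s \<le> t" for s
    unfolding J_def using that
  proof (intro cINF_greatest)
    fix r assume r: "r \<in> {s..t}"
    show "I s + K s \<le> A r + K r" using I_le[OF that(1) r] mK'[of s r] that r by auto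
  qed auto
  have J_le: "J s \<le> I s + K t" if "0 \<le> s" "s \<le> t" for s
  proof -
    have "J s - K t \<le> I s" unfolding I_def[of s] using that
    proof (intro cINF_greatest)
      fix r assume r: "r \<in> {s..t}"
      show "J s - K t \<le> A r" using J_le'[OF that(1) r] mK'[of r t] that r by auto
    qed auto
    then show ?thesis by simp
  qed
  have J_nn: "0 \<le> J s" if "0 \<le> s" "s \<le> t" for s
    unfolding J_def
  proof (rule cINF_greatest)
    show "{s..t} \<noteq> {}" using that by simp
    fix r assume "r \<in> {s..t}" then show "0 \<le> A r + K r" using that AKnn by simp
  qed
  have bddB: "bdd_above ((\<lambda>s. min (B s) (I s)) ` {0..t})"
  proof (rule bdd_aboveI2[where M="A t"])
    fix s assume "s \<in> {0..t}"
    then show "min (B s) (I s) \<le> A t" using I_le[of s t] by auto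
  qed
  have bddT: "bdd_above ((\<lambda>s. min (max (B s + K s) 0) (J s)) ` {0..t})"
  proof (rule bdd_aboveI2[where M="A t + K t"])
    fix s assume "s \<in> {0..t}"
    then show "min (max (B s + K s) 0) (J s) \<le> A t + K t" using J_le'[of s t] by auto
  qed
  define \<beta> where "\<beta> = beta u l y t"
  define \<Theta> where "\<Theta> = Theta u l xi t"
  have T_upper: "min (max (B s + K s) 0) (J s) \<le> \<Theta>" if "s \<in> {0..t}" for s
    unfolding \<Theta>_def Theta_eq using that bddT by (rule cSUP_upper)
  have T_nn: "0 \<le> \<Theta>"
    using T_upper[of t] t0 J_nn[of t] by auto
  have T_le: "\<Theta> \<le> max 0 (\<beta> + K t)"
    unfolding \<Theta>_def Theta_eq
  proof (rule cSUP_least)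
    show "{0..t} \<noteq> {}" using t0 by auto
    fix s assume s: "s \<in> {0..t}"
    have "min (B s) (I s) \<le> \<beta>" unfolding \<beta>_def beta_eq using s bddB by (rule cSUP_upper)
    moreover have "J s \<le> I s + K t" using J_le s by auto
    moreover have "K s \<le> K t" using mK' s by auto
    ultimately show "min (max (B s + K s) 0) (J s) \<le> max 0 (\<beta> + K t)" by linarith
  qed
  have T_ge: "\<beta> + K t \<le> \<Theta>"
  proof -
    have "\<beta> \<le> \<Theta> - K t" unfolding \<beta>_def beta_eq
    proof (rule cSUP_least)
      show "{0..t} \<noteq> {}" using t0 by auto
      fix s assume s: "s \<in> {0..t}"
      define m where "m = min (B s) (I s) + K t"
      have "m \<le> \<Theta>"
      proof (cases "m \<le> 0")
        case True then show ?thesis using T_nn by linarith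
      next
        case False
        then have mpos: "0 < m" by simp
        show ?thesis
        proof (rule field_le_epsilon)
          fix e :: real assume e: "0 < e"
          show "m \<le> \<Theta> + e"
          proof (cases "e < m")
            case False then show ?thesis using T_nn by linarith
          next
            case True
            have "m - e \<le> \<Theta>"
            proof (cases "K t - e \<le> K s")
              case True
              have "m - e \<le> min (max (B s + K s) 0) (J s)"
                using True J_ge[of s] s unfolding m_def by auto
              then show ?thesis using T_upper[OF s] by linarith
            next
              case False
              have "\<exists>r\<in>{s..t}. K t - e \<le> kappa r \<and>
                  min (xi r - l r) (rlim xi r - rlim l r) < m - e"
                using False s e \<open>e < m\<close> unfolding K_def
                by (intro key[OF monoK rc int0]) auto
              then obtain r where r: "r \<in> {s..t}" "K t - e \<le> K r" "c r + K r < m - e"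
                using g_eq s unfolding K_def by auto
              have r0: "r \<in> {0..t}" using r s by auto
              have "I s \<le> A r" using I_le[of s r] r s by auto
              moreover have "m \<le> I s + K t" unfolding m_def by simp
              ultimately have yu: "m - K t \<le> y r - u r"
                using r(2) r(3) unfolding A_def by linarith
              have Br: "m - K t \<le> B r" using yu unfolding B_def by simp
              have "I s \<le> I r" using I_mono[of s r] r s by auto
              then have "m - e \<le> J r" using J_ge[of r] r0 r(2) unfolding m_def by auto
              then have "m - e \<le> min (max (B r + K r) 0) (J r)" using Br r(2) by auto
              then show ?thesis using T_upper[OF r0] by linarith
            qed
            then show ?thesis by linarith
          qed
        qed
      qed
      then show "min (B s) (I s) \<le> \<Theta> - K t" unfolding m_def by linarith
    qed
    then show ?thesis by linarith
  qed
  show ?thesis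
    using alpha_eq T_le T_ge T_nn unfolding \<beta>_def[symmetric] \<Theta>_def[symmetric] K_def
    by linarith
qed

end
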